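(* For every integer $n\ge 1$, letting $\mu=\mu(n)$ be the exponent of the highest power of $2$ dividing $n$, $$t^{\mu}\bigl(B_{n+1}(t)+B_{n-1}(t)\bigr)=\bigl(B_{2^{\mu}+1}(t)+B_{2^{\mu}-1}(t)\bigr)B_{n}(t).$$ In particular, if $n$ is odd then $B_{n+1}(t)+B_{n-1}(t)=tB_n(t)$.
   Context: The Stern polynomials $B_n(t)\in\mathbb{Z}[t]$, $n\ge 0$, are defined by $B_0(t)=0$, $B_1(t)=1$, $B_{2n}(t)=tB_n(t)$ and $B_{2n+1}(t)=B_n(t)+B_{n+1}(t)$ for $n\ge 1$. *)

theory Defs
  imports "HOL-Computational_Algebra.Polynomial" "HOL-Computational_Algebra.Primes"
begin

function stern_poly :: "nat \<Rightarrow> int poly" where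
  "stern_poly n =
     (if n = 0 then 0
      else if n = 1 then 1
      else if even n then pCons 0 (stern_poly (n div 2))
      else stern_poly (n div 2) + stern_poly (n div 2 + 1))"
  by pat_completeness auto
termination
  by (relation "measure id") (auto, presburger+)

end

theory Submission
  imports Defs
begin

declare stern_poly.simps[simp del]

lemma s0[simp]: "stern_poly 0 = 0" by (simp add: stern_poly.simps)
lemma s1[simp]: "stern_poly 1 = 1" by (simp add: stern_poly.simps)
lemma sev: "stern_poly (2*n) = [:0,1:] * stern_poly n"
proof (cases "n = 0")
  case True then show ?thesis by simp
next
  case False then show ?thesis
    using stern_poly.simps[of "2*n"] by simp
qed
lemma sod: "stern_poly (2*n+1) = stern_poly n + stern_poly (n+1)"
proof (cases "n = 0")
  case True then show ?thesis by simp
next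
  case False then show ?thesis
    using stern_poly.simps[of "2*n+1"] by simp
qed

lemma spow: "stern_poly (2^k * m) = [:0,1:]^k * stern_poly m"
  by (induction k) (auto simp: sev mult.assoc)

lemma G: assumes "N \<ge> 1"
  shows "stern_poly (2*N+1) + stern_poly (2*N-1) = 2 * stern_poly N + (stern_poly (N+1) + stern_poly (N-1))"
proof -
  have e: "2*N-1 = 2*(N-1)+1" "N - 1 + 1 = N" using assms by simp_all
  have b: "stern_poly (2*N-1) = stern_poly (N-1) + stern_poly N"
    unfolding e(1) sod e(2) ..
  show ?thesis unfolding b sod by (simp add: algebra_simps mult_2)
qed

lemma oddcase: "odd n \<Longrightarrow> stern_poly (n + 1) + stern_poly (n - 1) = [:0, 1:] * stern_poly n"
proof -
  assume "odd n"
  then obtain m where m: "n = 2*m+1" by (metis oddE)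
  have h: "n+1 = 2*(m+1)" "n - 1 = 2*m" using m by auto
  show ?thesis unfolding h unfolding m sev sod by (simp add: algebra_simps)
qed

lemma s2: "stern_poly 2 = [:0,1:]"
proof -
  have "stern_poly (2*1) = [:0,1:]*stern_poly 1" by (rule sev)
  then show ?thesis by (simp only: mult_1_right s1)
qed
lemma s2'[simp]: "stern_poly (Suc (Suc 0)) = [:0,1:]" using s2 by (simp add: numeral_2_eq_2)
lemma s1'[simp]: "stern_poly (Suc 0) = 1" using s1 by simp

lemma L: "odd m \<Longrightarrow> stern_poly (2^k*m+1) + stern_poly (2^k*m - 1)
   = (stern_poly (2^k+1) + stern_poly (2^k-1)) * stern_poly m"
proof (induction k)
  case 0
  have "stern_poly (2^0*m+1) + stern_poly (2^0*m - 1) = [:0,1:] * stern_poly m"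
    using oddcase[OF 0] by simp
  also have "[:0,1:] = stern_poly (2^0+1) + stern_poly (2^0-1)" using s2 by simp
  finally show ?case .
next
  case (Suc k)
  have m1: "m \<ge> 1" using Suc.prems by (cases m) auto
  have N: "2^k*m \<ge> 1" using m1 by simp
  have e: "2^Suc k*m = 2*(2^k*m)" by simp
  have "stern_poly (2^Suc k*m+1) + stern_poly (2^Suc k*m - 1)
     = 2 * stern_poly (2^k*m) + (stern_poly (2^k*m+1) + stern_poly (2^k*m-1))"
    unfolding e by (rule G[OF N])
  also have "\<dots> = (2*[:0,1:]^k + (stern_poly (2^k+1) + stern_poly (2^k-1))) * stern_poly m"
    unfolding Suc.IH[OF Suc.prems] spow by (simp add: algebra_simps)
  also have "2*[:0,1:]^k + (stern_poly (2^k+1) + stern_poly (2^k-1))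
     = stern_poly (2^Suc k+1) + stern_poly (2^Suc k-1)"
  proof -
    have e2: "2^Suc k = 2*(2^k::nat)" by simp
    have "(1::nat) \<le> 2^k" by simp
    from G[OF this] show ?thesis unfolding e2 using spow[of k 1] by simp
  qed
  finally show ?case .
qed

theorem mainTheorem3:
  fixes n :: nat
  assumes "n \<ge> 1"
  shows "([:0, 1:] ^ multiplicity (2::nat) n * (stern_poly (n + 1) + stern_poly (n - 1))
           = (stern_poly (2 ^ multiplicity (2::nat) n + 1) + stern_poly (2 ^ multiplicity (2::nat) n - 1))
             * stern_poly n) \<and>
         (odd n \<longrightarrow> stern_poly (n + 1) + stern_poly (n - 1) = [:0, 1:] * stern_poly n)"
proof
  define k where "k = multiplicity (2::nat) n"
  obtain m where m: "n = 2 ^ k * m" "\<not> 2 dvd m"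
    using multiplicity_decompose'[of n 2] unfolding k_def[symmetric] using assms by auto
  have A: "stern_poly (n+1) + stern_poly (n-1) = (stern_poly (2^k+1) + stern_poly (2^k-1)) * stern_poly m"
    unfolding m(1) using L[of m k] m(2) by blast
  have B: "stern_poly n = [:0,1:]^k * stern_poly m" unfolding m(1) by (rule spow)
  show "[:0, 1:] ^ multiplicity (2::nat) n * (stern_poly (n + 1) + stern_poly (n - 1))
           = (stern_poly (2 ^ multiplicity (2::nat) n + 1) + stern_poly (2 ^ multiplicity (2::nat) n - 1))
             * stern_poly n"
    unfolding k_def[symmetric] A B by (simp only: mult_ac)
  show "odd n \<longrightarrow> stern_poly (n + 1) + stern_poly (n - 1) = [:0, 1:] * stern_poly n"
    using oddcase by blast
qed

end
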